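(* Let $v=v(n)$ and $r=r(n)$ be positive integers with $v\to\infty$, $r\to\infty$ and $r=o(v)$. If the random vector $\mathbf d=(d_1,\dots,d_v)$ has distribution $\mathrm{Multi}(v,2v+r)|_{\ge2}$, then a.a.s. $D_3(\mathbf d)\sim r$ and \[\sum_{i:d_i\ge3}\binom{d_i}{2}<4r.\]
   Context: For positive integers $v,t$, $\mathrm{Multi}(v,t)$ is the multinomial distribution on vectors $(d_1,\dots,d_v)$ of nonnegative integers summing to $t$, with $\mathbf P[d_1=j_1,\dots,d_v=j_v]=\frac{t!}{v^t j_1!\cdots j_v!}$ (the numbers of balls in $v$ bins when $t$ balls are thrown independently and uniformly). $\mathrm{Multi}(v,t)|_{\ge2}$ is this distribution conditioned on the event that every $d_i\ge2$. $D_3(\mathbf d)=|\{i:d_i=3\}|$. A.a.s. means with probability $1-o(1)$ as $n\to\infty$. *)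

theory Defs
  imports Complex_Main
begin

definition vectors :: "nat \<Rightarrow> nat \<Rightarrow> nat list set" where
  "vectors v t = {d. length d = v \<and> sum_list d = t}"

definition multi_pmf :: "nat \<Rightarrow> nat \<Rightarrow> nat list \<Rightarrow> real" where
  "multi_pmf v t d = fact t / (real v ^ t * prod_list (map fact d))"

definition multi_prob :: "nat \<Rightarrow> nat \<Rightarrow> (nat list \<Rightarrow> bool) \<Rightarrow> real" where
  "multi_prob v t P = (\<Sum>d\<in>{d\<in>vectors v t. P d}. multi_pmf v t d)"

definition multi_ge2_prob :: "nat \<Rightarrow> nat \<Rightarrow> (nat list \<Rightarrow> bool) \<Rightarrow> real" where
  "multi_ge2_prob v t P =
     multi_prob v t (\<lambda>d. (\<forall>i<length d. d ! i \<ge> 2) \<and> P d) /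
     multi_prob v t (\<lambda>d. \<forall>i<length d. d ! i \<ge> 2)"

definition D3 :: "nat list \<Rightarrow> nat" where
  "D3 d = card {i. i < length d \<and> d ! i = 3}"

end

theory Submission imports Defs begin

lemma prod_list_nth: "prod_list (map f d) = (\<Prod>l<length d. (f (d!l) :: real))"
  by (induct d rule: rev_induct) (auto simp: nth_append lessThan_Suc_atMost[symmetric] lessThan_Suc)

lemma sum_list_nth': "sum_list d = (\<Sum>l<length d. (d!l :: nat))"
  by (simp add: sum_list_sum_nth atLeast0LessThan)

definition Vs :: "nat \<Rightarrow> nat \<Rightarrow> nat list set" where
  "Vs m r = {d. length d = m \<and> sum_list d = 2*m + r \<and> (\<forall>i<m. d!i \<ge> 2)}"

definition wt :: "nat list \<Rightarrow> real" where
  "wt d = 1 / prod_list (map fact d)"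

lemma wt_pos: "wt d > 0"
  unfolding wt_def by (induct d) auto

lemma finite_vectors: "finite (vectors m s)"
proof -
  have "vectors m s \<subseteq> {xs. set xs \<subseteq> {0..s} \<and> length xs = m}"
    unfolding vectors_def using member_le_sum_list by fastforce
  thus ?thesis by (rule finite_subset) (rule finite_lists_length_eq, simp)
qed

lemma Vs_eq: "Vs m r = {d\<in>vectors m (2*m+r). \<forall>i<length d. 2 \<le> d!i}"
  unfolding Vs_def vectors_def by auto

lemma finite_Vs: "finite (Vs m r)"
  unfolding Vs_eq using finite_vectors by simp

lemma Vs_ne: assumes "m > 0" shows "replicate (m-1) 2 @ [2+r] \<in> Vs m r"
  using assms unfolding Vs_def by (auto simp: nth_append sum_list_replicate)

lemma ge2_prob_eq:
  assumes "m > 0"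
  shows "multi_ge2_prob m (2*m+r) P = (\<Sum>d\<in>{d\<in>Vs m r. P d}. wt d) / (\<Sum>d\<in>Vs m r. wt d)"
proof -
  let ?c = "fact (2*m+r) / real m ^ (2*m+r) :: real"
  have c: "?c \<noteq> 0" using assms by simp
  have 1: "multi_prob m (2*m+r) P' = ?c * (\<Sum>d\<in>{d\<in>vectors m (2*m+r). P' d}. wt d)" for P'
    unfolding multi_prob_def multi_pmf_def wt_def sum_distrib_left by (rule sum.cong) auto
  have 2: "{d \<in> vectors m (2 * m + r). (\<forall>i<length d. 2 \<le> d ! i) \<and> P d} = {d\<in>Vs m r. P d}"
    unfolding Vs_eq by auto
  have 3: "{d \<in> vectors m (2 * m + r). (\<forall>i<length d. 2 \<le> d ! i)} = Vs m r"
    unfolding Vs_eq by auto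
  show ?thesis unfolding multi_ge2_prob_def 1 2 3 using c by simp
qed

lemma card_big:
  assumes "d \<in> Vs m r" shows "card {j. j<m \<and> 3 \<le> d!j} \<le> r"
proof -
  have len: "length d = m" and s: "sum_list d = 2*m+r" and g: "\<forall>i<m. 2 \<le> d!i" using assms by (auto simp: Vs_def)
  have "(\<Sum>l<m. (2 + (if 3 \<le> d!l then 1 else 0)::nat)) \<le> (\<Sum>l<m. d!l)"
    by (rule sum_mono) (use g in \<open>auto simp: not_le\<close>)
  also have "\<dots> = 2*m+r" using s len by (simp add: sum_list_nth')
  also have "(\<Sum>l<m. (2 + (if 3 \<le> d!l then 1 else 0)::nat)) = 2*m + card {j. j<m \<and> 3 \<le> d!j}"
  proof -
    have "(\<Sum>l<m. (2 + (if 3 \<le> d!l then 1 else 0)::nat)) = (\<Sum>l<m. 2) + (\<Sum>l<m. (if 3 \<le> d!l then 1 else 0))"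
      by (rule sum.distrib)
    moreover have "(\<Sum>l<m. (if 3 \<le> d!l then 1 else 0::nat)) = card ({..<m} \<inter> {l. 3 \<le> d!l})"
      by (simp add: sum.If_cases)
    moreover have "{..<m} \<inter> {l. 3 \<le> d!l} = {j. j<m \<and> 3 \<le> d!j}" by auto
    ultimately show ?thesis by simp
  qed
  finally show ?thesis by simp
qed

lemma sum_two: fixes h :: "nat \<Rightarrow> 'a::comm_monoid_add"
  assumes "i<m" "j<m" "i\<noteq>j"
  shows "(\<Sum>l<m. h l) = h i + h j + (\<Sum>l\<in>{..<m}-{i,j}. h l)"
proof -
  have "(\<Sum>l<m. h l) = h i + (\<Sum>l\<in>{..<m}-{i}. h l)" using assms by (simp add: sum.remove)
  also have "(\<Sum>l\<in>{..<m}-{i}. h l) = h j + (\<Sum>l\<in>{..<m}-{i}-{j}. h l)" using assms by (subst sum.remove) auto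
  finally show ?thesis by (simp add: add.assoc Diff_insert2[symmetric] insert_commute)
qed

lemma prod_two: fixes h :: "nat \<Rightarrow> 'a::comm_monoid_mult"
  assumes "i<m" "j<m" "i\<noteq>j"
  shows "(\<Prod>l<m. h l) = h i * h j * (\<Prod>l\<in>{..<m}-{i,j}. h l)"
proof -
  have "(\<Prod>l<m. h l) = h i * (\<Prod>l\<in>{..<m}-{i}. h l)" using assms by (simp add: prod.remove)
  also have "(\<Prod>l\<in>{..<m}-{i}. h l) = h j * (\<Prod>l\<in>{..<m}-{i}-{j}. h l)" using assms by (subst prod.remove) auto
  finally show ?thesis by (simp add: mult.assoc Diff_insert2[symmetric] insert_commute)
qed

lemma upd_facts:
  assumes "length d = m" "i<m" "j<m" "i\<noteq>j"
  shows "sum_list (d[i:=a, j:=b]) + d!i + d!j = sum_list d + a + b"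
    and "prod_list (map fact (d[i:=a, j:=b])) * fact (d!i) * fact (d!j) = prod_list (map fact d) * fact a * (fact b :: real)"
    and "\<forall>l. l \<noteq> i \<and> l \<noteq> j \<longrightarrow> d[i:=a, j:=b]!l = d!l"
    and "d[i:=a, j:=b]!i = a" "d[i:=a, j:=b]!j = b" "length (d[i:=a, j:=b]) = m"
proof -
  let ?e = "d[i:=a, j:=b]"
  have el: "\<And>l. l<m \<Longrightarrow> l\<noteq>i \<Longrightarrow> l\<noteq>j \<Longrightarrow> ?e!l = d!l" using assms by auto
  have ei: "?e!i = a" "?e!j = b" using assms by auto
  have r1: "(\<Sum>l\<in>{..<m}-{i,j}. ?e!l) = (\<Sum>l\<in>{..<m}-{i,j}. d!l)" by (rule sum.cong) (auto simp: el)
  have r2: "(\<Prod>l\<in>{..<m}-{i,j}. fact (?e!l)::real) = (\<Prod>l\<in>{..<m}-{i,j}. fact (d!l))" by (rule prod.cong) (auto simp: el)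
  show "sum_list ?e + d!i + d!j = sum_list d + a + b"
    using assms unfolding sum_list_nth' by (simp add: sum_two[OF assms(2-4)] ei r1)
  show "prod_list (map fact ?e) * fact (d!i) * fact (d!j) = prod_list (map fact d) * fact a * (fact b :: real)"
    using assms unfolding prod_list_nth by (simp add: prod_two[OF assms(2-4)] ei r2 ac_simps)
  show "\<forall>l. l \<noteq> i \<and> l \<noteq> j \<longrightarrow> ?e!l = d!l" by auto
  show "?e!i = a" "?e!j = b" "length ?e = m" using ei assms by auto
qed

lemma upd_back:
  assumes "i < length d" "j < length d" "i\<noteq>j" "d!i = a0" "d!j = b0"
  shows "(d[i:=a, j:=b])[i:=a0, j:=b0] = d"
  by (rule nth_equalityI) (use assms in \<open>auto simp: nth_list_update\<close>)

definition W :: "nat \<Rightarrow> nat \<Rightarrow> nat \<Rightarrow> nat \<Rightarrow> real" where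
  "W m r i k = (\<Sum>d\<in>{d\<in>Vs m r. d!i = k}. wt d)"

lemma card_J2:
  assumes "d \<in> Vs m r" "i<m"
  shows "real m - 1 - real r \<le> real (card {j. j<m \<and> j\<noteq>i \<and> d!j = 2})"
proof -
  have g: "\<forall>l<m. 2 \<le> d!l" using assms by (auto simp: Vs_def)
  have e: "{j. j<m \<and> d!j = 2} = {..<m} - {j. j<m \<and> 3 \<le> d!j}" using g by force
  have c1: "card {j. j<m \<and> d!j = 2} = m - card {j. j<m \<and> 3 \<le> d!j}"
    unfolding e by (subst card_Diff_subset) auto
  have "{j. j<m \<and> j\<noteq>i \<and> d!j = 2} = {j. j<m \<and> d!j = 2} - {i}" by auto
  hence c2: "card {j. j<m \<and> j\<noteq>i \<and> d!j = 2} \<ge> card {j. j<m \<and> d!j = 2} - 1"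
    by (simp add: card_Diff_singleton_if)
  have cb: "card {j. j<m \<and> 3 \<le> d!j} \<le> r" by (rule card_big[OF assms(1)])
  show ?thesis using c1 c2 cb by linarith
qed

lemma card_J3:
  assumes "d \<in> Vs m r"
  shows "real (card {j. j<m \<and> j\<noteq>i \<and> d!j = 3}) \<le> real r"
proof -
  have "card {j. j<m \<and> j\<noteq>i \<and> d!j = 3} \<le> card {j. j<m \<and> 3 \<le> d!j}"
    by (rule card_mono) auto
  thus ?thesis using card_big[OF assms] by linarith
qed

lemma W_step:
  assumes i: "i<m" and k: "3 \<le> k"
  shows "real k / 3 * (real m - 1 - real r) * W m r i k \<le> real r * W m r i (k-1)"
proof -
  define A where "A = (\<lambda>k. {d\<in>Vs m r. d!i = k})"
  define J2 where "J2 = (\<lambda>d. {j. j<m \<and> j\<noteq>i \<and> d!j = (2::nat)})"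
  define J3 where "J3 = (\<lambda>d. {j. j<m \<and> j\<noteq>i \<and> d!j = (3::nat)})"
  define f where "f = (\<lambda>(d::nat list,j::nat). (d[i:=k-1, j:=3], j))"
  define f' where "f' = (\<lambda>(d::nat list,j::nat). (d[i:=k, j:=2], j))"
  have finA: "finite (A k')" for k' unfolding A_def using finite_Vs by simp
  have fJ2: "finite (J2 d)" for d unfolding J2_def by simp
  have fJ3: "finite (J3 d)" for d unfolding J3_def by simp
  have P1: "(d,j) \<in> Sigma (A k) J2 \<longleftrightarrow> d \<in> Vs m r \<and> d!i = k \<and> j<m \<and> j\<noteq>i \<and> d!j = 2" for d j
    unfolding A_def J2_def by auto
  have P2: "(d,j) \<in> Sigma (A (k-1)) J3 \<longleftrightarrow> d \<in> Vs m r \<and> d!i = k-1 \<and> j<m \<and> j\<noteq>i \<and> d!j = 3" for d j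
    unfolding A_def J3_def by auto
  have lenV: "d \<in> Vs m r \<Longrightarrow> length d = m" for d by (simp add: Vs_def)
  have inV: "d[i:=a, j:=b] \<in> Vs m r" if "d \<in> Vs m r" "j<m" "j\<noteq>i" "2 \<le> a" "2 \<le> b" "d!i + d!j = a + b" for d j a b
  proof -
    note u = upd_facts[OF lenV[OF that(1)] i that(2) that(3)[symmetric], of a b]
    have "sum_list d = 2*m+r" "\<forall>l<m. 2 \<le> d!l" using that(1) by (auto simp: Vs_def)
    have s: "sum_list (d[i:=a, j:=b]) = 2*m+r" using u(1) that(6) \<open>sum_list d = 2*m+r\<close> by linarith
    have "\<forall>l<m. 2 \<le> d[i:=a, j:=b]!l"
    proof (intro allI impI)
      fix l assume "l<m" thus "2 \<le> d[i:=a, j:=b]!l"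
        using u(3,4,5) that(4,5) \<open>\<forall>l<m. 2 \<le> d!l\<close> by (cases "l=i"; cases "l=j") auto
    qed
    thus ?thesis using s u(6) unfolding Vs_def by auto
  qed
  have bij: "bij_betw f (Sigma (A k) J2) (Sigma (A (k-1)) J3)"
  proof (rule bij_betw_byWitness[where f'=f'])
    show "\<forall>a\<in>Sigma (A k) J2. f' (f a) = a"
    proof
      fix p assume "p \<in> Sigma (A k) J2"
      then obtain d j where p: "p = (d,j)" and h: "d \<in> Vs m r" "d!i = k" "j<m" "j\<noteq>i" "d!j = 2" using P1 by (cases p) auto
      show "f' (f p) = p" unfolding p f_def f'_def using upd_back[of i d j] h lenV[OF h(1)] i by auto
    qed
    show "\<forall>a\<in>Sigma (A (k-1)) J3. f (f' a) = a"
    proof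
      fix p assume "p \<in> Sigma (A (k-1)) J3"
      then obtain d j where p: "p = (d,j)" and h: "d \<in> Vs m r" "d!i = k-1" "j<m" "j\<noteq>i" "d!j = 3" using P2 by (cases p) auto
      show "f (f' p) = p" unfolding p f_def f'_def using upd_back[of i d j] h lenV[OF h(1)] i by auto
    qed
    show "f ` Sigma (A k) J2 \<subseteq> Sigma (A (k - 1)) J3"
    proof
      fix p assume "p \<in> f ` Sigma (A k) J2"
      then obtain d j where pp: "p = f (d,j)" "(d,j) \<in> Sigma (A k) J2" by auto
      hence h: "d \<in> Vs m r" "d!i = k" "j<m" "j\<noteq>i" "d!j = 2" using P1 by auto
      note u = upd_facts[OF lenV[OF h(1)] i h(3) h(4)[symmetric], of "k-1" 3]
      have "d[i:=k-1, j:=3] \<in> Vs m r" by (rule inV) (use h k in auto)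
      thus "p \<in> Sigma (A (k - 1)) J3" unfolding pp f_def using u h P2 by auto
    qed
    show "f' ` Sigma (A (k-1)) J3 \<subseteq> Sigma (A k) J2"
    proof
      fix p assume "p \<in> f' ` Sigma (A (k-1)) J3"
      then obtain d j where pp: "p = f' (d,j)" "(d,j) \<in> Sigma (A (k-1)) J3" by auto
      hence h: "d \<in> Vs m r" "d!i = k-1" "j<m" "j\<noteq>i" "d!j = 3" using P2 by auto
      note u = upd_facts[OF lenV[OF h(1)] i h(3) h(4)[symmetric], of k 2]
      have "d[i:=k, j:=2] \<in> Vs m r" by (rule inV) (use h k in auto)
      thus "p \<in> Sigma (A k) J2" unfolding pp f'_def using u h P1 by auto
    qed
  qed
  have wrel: "wt (fst (f p)) = real k / 3 * wt (fst p)" if "p \<in> Sigma (A k) J2" for p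
  proof -
    obtain d j where p: "p = (d,j)" by force
    hence h: "d \<in> Vs m r" "d!i = k" "j<m" "j\<noteq>i" "d!j = 2" using P1 that by auto
    note u = upd_facts[OF lenV[OF h(1)] i h(3) h(4)[symmetric], of "k-1" 3]
    have fk: "fact k = real k * fact (k-1)" using k by (metis fact_reduce not_numeral_le_zero of_nat_0_eq_iff zero_less_iff_neq_zero)
    have pd: "prod_list (map fact d) > (0::real)" by (induct d) auto
    have "prod_list (map fact (d[i:=k-1, j:=3])) * (real k * fact (k-1)) * 2 = prod_list (map fact d) * fact (k-1) * (6::real)"
      using u(2) h fk by (simp add: numeral_3_eq_3)
    hence "prod_list (map fact (d[i:=k-1, j:=3])) = prod_list (map fact d) * 3 / real k" using k
      by (simp add: field_simps)
    thus ?thesis unfolding p f_def wt_def using pd k by simp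
  qed
  have "(\<Sum>p\<in>Sigma (A k) J2. real k / 3 * wt (fst p)) = (\<Sum>p\<in>Sigma (A (k-1)) J3. wt (fst p))"
  proof -
    have "(\<Sum>p\<in>Sigma (A k) J2. real k / 3 * wt (fst p)) = (\<Sum>p\<in>Sigma (A k) J2. wt (fst (f p)))"
      by (rule sum.cong) (auto simp: wrel)
    also have "\<dots> = (\<Sum>p\<in>Sigma (A (k-1)) J3. wt (fst p))"
      using sum.reindex_bij_betw[OF bij, of "\<lambda>p. wt (fst p)"] by simp
    finally show ?thesis .
  qed
  also have "(\<Sum>p\<in>Sigma (A k) J2. real k / 3 * wt (fst p)) = (\<Sum>d\<in>A k. real (card (J2 d)) * (real k / 3 * wt d))"
    using sum.Sigma[OF finA, where B=J2 and g="\<lambda>d j. real k / 3 * wt d"] fJ2 by (simp add: split_def)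
  also have "(\<Sum>p\<in>Sigma (A (k-1)) J3. wt (fst p)) = (\<Sum>d\<in>A (k-1). real (card (J3 d)) * wt d)"
    using sum.Sigma[OF finA, where B=J3 and g="\<lambda>d j. wt d"] fJ3 by (simp add: split_def)
  finally have eq: "(\<Sum>d\<in>A k. real (card (J2 d)) * (real k / 3 * wt d)) = (\<Sum>d\<in>A (k-1). real (card (J3 d)) * wt d)" .
  have "real k / 3 * (real m - 1 - real r) * W m r i k = (\<Sum>d\<in>A k. (real m - 1 - real r) * (real k / 3 * wt d))"
    unfolding W_def A_def sum_distrib_left by (simp add: ac_simps)
  also have "\<dots> \<le> (\<Sum>d\<in>A k. real (card (J2 d)) * (real k / 3 * wt d))"
  proof (rule sum_mono)
    fix d assume "d \<in> A k"
    hence "real m - 1 - real r \<le> real (card (J2 d))" unfolding A_def J2_def using card_J2 i by auto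
    moreover have "0 \<le> real k / 3 * wt d" using wt_pos[of d] by simp
    ultimately show "(real m - 1 - real r) * (real k / 3 * wt d) \<le> real (card (J2 d)) * (real k / 3 * wt d)"
      by (rule mult_right_mono)
  qed
  also note eq
  also have "(\<Sum>d\<in>A (k-1). real (card (J3 d)) * wt d) \<le> (\<Sum>d\<in>A (k-1). real r * wt d)"
  proof (rule sum_mono)
    fix d assume "d \<in> A (k-1)"
    hence "real (card (J3 d)) \<le> real r" unfolding A_def J3_def using card_J3 by auto
    thus "real (card (J3 d)) * wt d \<le> real r * wt d" using wt_pos[of d] by (simp add: mult_right_mono)
  qed
  also have "\<dots> = real r * W m r i (k-1)" unfolding W_def A_def sum_distrib_left ..
  finally show ?thesis .
qed


lemma W_nonneg: "0 \<le> W m r i k"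
  unfolding W_def using wt_pos by (simp add: sum_nonneg less_imp_le)

lemma W_le_Z: "W m r i k \<le> (\<Sum>d\<in>Vs m r. wt d)"
  unfolding W_def using wt_pos finite_Vs by (intro sum_mono2) (auto simp: less_imp_le)

lemma W_bound:
  assumes i: "i<m" and pos: "0 < real m - 1 - real r" and k: "2 \<le> k"
  shows "W m r i k \<le> (real r / (real m - 1 - real r))^(k-2) * (\<Sum>d\<in>Vs m r. wt d)"
  using k
proof (induction k rule: dec_induct)
  case base
  then show ?case using W_le_Z by simp
next
  case (step k)
  let ?y = "real r / (real m - 1 - real r)"
  have st: "real (Suc k) / 3 * (real m - 1 - real r) * W m r i (Suc k) \<le> real r * W m r i k"
    using W_step[OF i, of "Suc k" r] step(1) by simp
  have "(real m - 1 - real r) * W m r i (Suc k) \<le> real (Suc k) / 3 * (real m - 1 - real r) * W m r i (Suc k)"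
  proof -
    have "1 \<le> real (Suc k) / 3" using step(1) by simp
    moreover have "0 \<le> (real m - 1 - real r) * W m r i (Suc k)" using pos W_nonneg by simp
    ultimately have "1 * ((real m - 1 - real r) * W m r i (Suc k)) \<le> real (Suc k) / 3 * ((real m - 1 - real r) * W m r i (Suc k))"
      by (intro mult_right_mono)
    thus ?thesis by (simp add: mult.assoc)
  qed
  with st have "(real m - 1 - real r) * W m r i (Suc k) \<le> real r * W m r i k" by linarith
  hence "W m r i (Suc k) \<le> ?y * W m r i k" using pos by (simp add: field_simps)
  also have "\<dots> \<le> ?y * (?y^(k-2) * (\<Sum>d\<in>Vs m r. wt d))"
    using step(3) pos by (intro mult_left_mono) auto
  also have "\<dots> = ?y^(Suc k - 2) * (\<Sum>d\<in>Vs m r. wt d)"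
  proof -
    have "Suc k - 2 = Suc (k-2)" using step(1) by simp
    thus ?thesis by (simp only: power_Suc mult.assoc)
  qed
  finally show ?case .
qed

lemma geom_eq:
  fixes z :: real
  shows "3 \<le> s \<Longrightarrow> (1-z) * (\<Sum>k\<in>{4..s}. z^(k-2)) = z^2 - z^(s-1)"
proof (induction s)
  case 0 then show ?case by simp
next
  case (Suc s)
  show ?case
  proof (cases "s = 2")
    case True then show ?thesis by (simp add: numeral_eq_Suc)
  next
    case False
    hence s3: "3 \<le> s" using Suc.prems by simp
    have "{4..Suc s} = insert (Suc s) {4..s}" using s3 by auto
    hence "(\<Sum>k\<in>{4..Suc s}. z^(k-2)) = z^(Suc s - 2) + (\<Sum>k\<in>{4..s}. z^(k-2))" by simp
    hence "(1-z) * (\<Sum>k\<in>{4..Suc s}. z^(k-2)) = (1-z) * z^(Suc s - 2) + (z^2 - z^(s-1))"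
      using Suc.IH[OF s3] by (simp add: distrib_left)
    also have "Suc s - 2 = s - 1" using s3 by simp
    also have "(1-z) * z^(s-1) + (z^2 - z^(s-1)) = z^2 - z^(Suc s - 1)"
      using s3 by (cases s) (auto simp: algebra_simps)
    finally show ?thesis .
  qed
qed

lemma geom:
  fixes z :: real assumes "0 \<le> z" "z < 1"
  shows "(\<Sum>k\<in>{4..s}. z^(k-2)) \<le> z^2/(1-z)"
proof -
  note eq = geom_eq[of s z]
  show ?thesis
  proof (cases "3 \<le> s")
    case True
    have "(1-z) * (\<Sum>k\<in>{4..s}. z^(k-2)) \<le> z^2" using eq[OF True] assms by simp
    thus ?thesis using assms by (simp add: field_simps)
  next
    case False
    hence "{4..s} = {}" by auto
    thus ?thesis using assms by simp
  qed
qed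

definition gq :: "nat \<Rightarrow> real" where "gq k = (if 4 \<le> k then 2^(k-2) else 0)"

lemma gq_nonneg: "0 \<le> gq k" unfolding gq_def by simp

lemma per_index:
  assumes "l < m"
  shows "(\<Sum>d\<in>Vs m r. wt d * gq (d!l)) = (\<Sum>k\<in>{4..2*m+r}. gq k * W m r l k)"
proof -
  have "(\<Sum>d\<in>Vs m r. wt d * gq (d!l)) = (\<Sum>d\<in>Vs m r. \<Sum>k\<in>{4..2*m+r}. if d!l = k then wt d * gq k else 0)"
  proof (rule sum.cong[OF refl])
    fix d assume d: "d \<in> Vs m r"
    have "d!l \<in> set d" using d assms unfolding Vs_def by auto
    hence "d!l \<le> sum_list d" using member_le_sum_list[of "d!l" d] by simp
    hence "d!l \<le> 2*m+r" using d unfolding Vs_def by auto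
    hence "(\<Sum>k\<in>{4..2*m+r}. if d!l = k then wt d * gq k else 0) = (if d!l \<in> {4..2*m+r} then wt d * gq (d!l) else 0)"
      by (simp add: sum.delta)
    thus "wt d * gq (d!l) = (\<Sum>k\<in>{4..2*m+r}. if d!l = k then wt d * gq k else 0)"
      using \<open>d!l \<le> 2*m+r\<close> by (auto simp: gq_def)
  qed
  also have "\<dots> = (\<Sum>k\<in>{4..2*m+r}. \<Sum>d\<in>Vs m r. if d!l = k then wt d * gq k else 0)"
    by (rule sum.swap)
  also have "\<dots> = (\<Sum>k\<in>{4..2*m+r}. gq k * W m r l k)"
  proof (rule sum.cong[OF refl])
    fix k
    have "(\<Sum>d\<in>Vs m r. if d!l = k then wt d * gq k else 0) = (\<Sum>d\<in>{d\<in>Vs m r. d!l = k}. wt d * gq k)"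
      using finite_Vs by (simp add: sum.inter_filter)
    thus "(\<Sum>d\<in>Vs m r. if d!l = k then wt d * gq k else 0) = gq k * W m r l k"
      unfolding W_def by (simp add: sum_distrib_left mult.commute)
  qed
  finally show ?thesis .
qed

lemma expect_bound:
  assumes pos: "0 < real m - 1 - real r" and z: "2 * (real r / (real m - 1 - real r)) < 1"
  shows "(\<Sum>d\<in>Vs m r. wt d * (\<Sum>l<m. gq (d!l))) \<le>
     real m * (\<Sum>d\<in>Vs m r. wt d) * ((2 * (real r / (real m - 1 - real r)))^2 / (1 - 2 * (real r / (real m - 1 - real r))))"
proof -
  let ?y = "real r / (real m - 1 - real r)"
  let ?Z = "\<Sum>d\<in>Vs m r. wt d"
  have y0: "0 \<le> ?y" using pos by simp
  have Z0: "0 \<le> ?Z" using wt_pos by (simp add: sum_nonneg less_imp_le)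
  have each: "(\<Sum>d\<in>Vs m r. wt d * gq (d!l)) \<le> ?Z * ((2*?y)^2 / (1 - 2*?y))" if l: "l<m" for l
  proof -
    have "(\<Sum>d\<in>Vs m r. wt d * gq (d!l)) = (\<Sum>k\<in>{4..2*m+r}. gq k * W m r l k)" by (rule per_index[OF l])
    also have "\<dots> \<le> (\<Sum>k\<in>{4..2*m+r}. ?Z * (2*?y)^(k-2))"
    proof (rule sum_mono)
      fix k assume "k \<in> {4..2*m+r}"
      hence k: "4 \<le> k" by simp
      have "gq k * W m r l k \<le> 2^(k-2) * (?y^(k-2) * ?Z)"
        using k W_bound[OF l pos, of k] by (auto simp: gq_def intro!: mult_left_mono)
      hence "gq k * W m r l k \<le> ?Z * (2^(k-2) * ?y^(k-2))" by (simp add: ac_simps)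
      also have "\<dots> = ?Z * (2*?y)^(k-2)" by (simp only: power_mult_distrib)
      finally show "gq k * W m r l k \<le> ?Z * (2*?y)^(k-2)" .
    qed
    also have "\<dots> = ?Z * (\<Sum>k\<in>{4..2*m+r}. (2*?y)^(k-2))" by (simp add: sum_distrib_left)
    also have "\<dots> \<le> ?Z * ((2*?y)^2 / (1 - 2*?y))"
      using geom[of "2*?y" "2*m+r"] y0 z Z0 by (intro mult_left_mono) auto
    finally show ?thesis .
  qed
  have "(\<Sum>d\<in>Vs m r. wt d * (\<Sum>l<m. gq (d!l))) = (\<Sum>l<m. \<Sum>d\<in>Vs m r. wt d * gq (d!l))"
    by (simp add: sum_distrib_left sum.swap[of _ "Vs m r"])
  also have "\<dots> \<le> (\<Sum>l<m. ?Z * ((2*?y)^2 / (1 - 2*?y)))" by (rule sum_mono, rule each, simp)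
  also have "\<dots> = real m * ?Z * ((2*?y)^2 / (1 - 2*?y))" by simp
  finally show ?thesis .
qed


lemma choose_aux: "(j+4) choose 2 \<le> 3*(j+2) + 2^(j+2)"
proof (induction j)
  case 0 then show ?case by (simp add: numeral_eq_Suc)
next
  case (Suc j)
  have c: "(Suc j + 4) choose 2 = (j+4) + ((j+4) choose 2)"
    by (simp add: numeral_eq_Suc)
  have "j+2 < 2^(j+2)" by (rule less_exp)
  thus ?case using c Suc.IH by simp
qed

lemma choose_bound: "4 \<le> k \<Longrightarrow> real (k choose 2) \<le> 3 * (real k - 2) + 2^(k-2)"
proof -
  assume k: "4 \<le> k"
  then obtain j where j: "k = j+4" by (metis add.commute le_Suc_ex)
  have "k choose 2 \<le> 3*(j+2) + 2^(j+2)" using choose_aux j by simp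
  hence "real (k choose 2) \<le> real (3*(j+2) + 2^(j+2))" by linarith
  thus ?thesis using j by (simp add: numeral_eq_Suc)
qed

lemma lin_bound: "4 \<le> k \<Longrightarrow> real k - 2 \<le> (2::real)^(k-2)"
proof -
  assume k: "4 \<le> k"
  have "k-2 < 2^(k-2)" by (rule less_exp)
  hence "real (k-2) < real (2^(k-2))" by linarith
  thus ?thesis using k by (simp add: of_nat_diff)
qed

lemma good_of_Q:
  assumes d: "d \<in> Vs m r" and c: "0 < c" "c \<le> \<epsilon>" "c \<le> 1"
    and Q: "(\<Sum>l<m. gq (d!l)) < c * real r"
  shows "\<bar>real (D3 d) - real r\<bar> \<le> \<epsilon> * real r \<and>
         (\<Sum>i | i < length d \<and> d ! i \<ge> 3. d ! i choose 2) < 4 * r"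
proof -
  have len: "length d = m" and s: "sum_list d = 2*m+r" and g: "\<forall>l<m. 2 \<le> d!l" using d by (auto simp: Vs_def)
  define h1 where "h1 l = real (d!l) - 2" for l
  define ind3 where "ind3 l = (if d!l = 3 then 1 else 0::real)" for l
  define tc where "tc l = (if 3 \<le> d!l then real (d!l choose 2) else 0)" for l
  have sh: "(\<Sum>l<m. h1 l) = real r"
  proof -
    have "(\<Sum>l<m. real (d!l)) = real (2*m+r)" using s len by (simp add: sum_list_nth' flip: of_nat_sum)
    thus ?thesis unfolding h1_def by (simp add: sum_subtractf)
  qed
  have sD: "(\<Sum>l<m. ind3 l) = real (D3 d)"
  proof -
    have "(\<Sum>l<m. ind3 l) = real (card ({..<m} \<inter> {l. d!l = 3}))"
      unfolding ind3_def by (simp add: sum.If_cases)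
    also have "{..<m} \<inter> {l. d!l = 3} = {i. i < length d \<and> d!i = 3}" using len by auto
    finally show ?thesis unfolding D3_def .
  qed
  have sT: "real (\<Sum>i | i < length d \<and> d ! i \<ge> 3. d ! i choose 2) = (\<Sum>l<m. tc l)"
  proof -
    have "{i. i < length d \<and> d ! i \<ge> 3} = {i\<in>{..<m}. 3 \<le> d!i}" using len by auto
    hence "real (\<Sum>i | i < length d \<and> d ! i \<ge> 3. d ! i choose 2) = (\<Sum>i\<in>{i\<in>{..<m}. 3 \<le> d!i}. real (d!i choose 2))"
      by (simp add: of_nat_sum)
    also have "\<dots> = (\<Sum>l<m. tc l)" unfolding tc_def
      using sum.inter_filter[of "{..<m}" "\<lambda>i. real (d!i choose 2)" "\<lambda>i. 3 \<le> d!i"] by simp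
    finally show ?thesis .
  qed
  have pw1: "0 \<le> h1 l - ind3 l \<and> h1 l - ind3 l \<le> gq (d!l)" if "l<m" for l
  proof -
    have "2 \<le> d!l" using g that by simp
    then consider "d!l = 2" | "d!l = 3" | "4 \<le> d!l" by linarith
    thus ?thesis
    proof cases
      case 3 thus ?thesis using lin_bound[OF 3] unfolding h1_def ind3_def gq_def by auto
    qed (auto simp: h1_def ind3_def gq_def)
  qed
  have pw2: "tc l \<le> 3 * h1 l + gq (d!l)" if "l<m" for l
  proof -
    have "2 \<le> d!l" using g that by simp
    then consider "d!l = 2" | "d!l = 3" | "4 \<le> d!l" by linarith
    thus ?thesis
    proof cases
      case 3 thus ?thesis using choose_bound[OF 3] unfolding h1_def tc_def gq_def by auto
    qed (auto simp: h1_def tc_def gq_def numeral_eq_Suc)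
  qed
  have "(\<Sum>l<m. h1 l - ind3 l) \<le> (\<Sum>l<m. gq (d!l))" using pw1 by (intro sum_mono) auto
  moreover have "0 \<le> (\<Sum>l<m. h1 l - ind3 l)" using pw1 by (intro sum_nonneg) auto
  moreover have "(\<Sum>l<m. h1 l - ind3 l) = real r - real (D3 d)" using sh sD by (simp add: sum_subtractf)
  moreover have "c * real r \<le> \<epsilon> * real r" using c by (simp add: mult_right_mono)
  ultimately have A: "\<bar>real (D3 d) - real r\<bar> \<le> \<epsilon> * real r" using Q by linarith
  have "(\<Sum>l<m. tc l) \<le> (\<Sum>l<m. 3 * h1 l + gq (d!l))" using pw2 by (intro sum_mono) auto
  also have "\<dots> = 3 * real r + (\<Sum>l<m. gq (d!l))" using sh by (simp add: sum.distrib sum_distrib_left[symmetric])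
  moreover have "c * real r \<le> 1 * real r" using c(3) by (intro mult_right_mono) auto
  ultimately have "(\<Sum>l<m. tc l) < 4 * real r" using Q by linarith
  hence "real (\<Sum>i | i < length d \<and> d ! i \<ge> 3. d ! i choose 2) < real (4 * r)" using sT by simp
  hence B: "(\<Sum>i | i < length d \<and> d ! i \<ge> 3. d ! i choose 2) < 4 * r" by (simp only: of_nat_less_iff)
  show ?thesis using A B by simp
qed


lemma alg_aux:
  fixes x y m r c :: real
  assumes "x > 0" "r > 0" "m > 0" "1 - 2*y > 0" "c > 0" "y = r/x"
  shows "m * ((2*y)^2/(1-2*y))/(c*r) = 4*y/((x/m)*(1-2*y)*c)"
proof -
  have "(2*y)^2 = 4*y*(r/x)" using assms(6) by (simp add: power2_eq_square)
  hence "m * ((2*y)^2/(1-2*y))/(c*r) = m * (4*y*(r/x)/(1-2*y))/(c*r)" by simp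
  also have "\<dots> = 4*y/((x/m)*(1-2*y)*c)" using assms(1-5) by (simp add: field_simps)
  finally show ?thesis .
qed

lemma prob_bound:
  fixes \<epsilon> c :: real
  assumes m: "m > 0" and r: "r > 0" and pos: "0 < real m - 1 - real r"
    and z: "2 * (real r / (real m - 1 - real r)) < 1"
    and c: "0 < c" "c \<le> \<epsilon>" "c \<le> 1"
  shows "1 - 4 * (real r / (real m - 1 - real r)) / ((1 - 1/real m - real r/real m) * (1 - 2 * (real r / (real m - 1 - real r))) * c)
     \<le> multi_ge2_prob m (2*m+r) (\<lambda>d. \<bar>real (D3 d) - real r\<bar> \<le> \<epsilon> * real r \<and>
                 (\<Sum>i | i < length d \<and> d ! i \<ge> 3. d ! i choose 2) < 4 * r)"
proof -
  define G where "G = (\<lambda>d. \<bar>real (D3 d) - real r\<bar> \<le> \<epsilon> * real r \<and>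
                 (\<Sum>i | i < length d \<and> d ! i \<ge> 3. d ! i choose 2) < 4 * r)"
  let ?y = "real r / (real m - 1 - real r)"
  define Q where "Q d = (\<Sum>l<m. gq (d!l))" for d
  let ?Z = "\<Sum>d\<in>Vs m r. wt d"
  let ?Zg = "\<Sum>d\<in>{d\<in>Vs m r. G d}. wt d"
  let ?Zb = "\<Sum>d\<in>{d\<in>Vs m r. \<not> G d}. wt d"
  have Zpos: "0 < ?Z"
    using finite_Vs Vs_ne[OF m, of r] wt_pos by (intro sum_pos2) (auto simp: less_imp_le)
  have split: "?Z = ?Zg + ?Zb"
  proof -
    have "Vs m r = {d\<in>Vs m r. G d} \<union> {d\<in>Vs m r. \<not> G d}" by auto
    hence "?Z = (\<Sum>d\<in>{d\<in>Vs m r. G d} \<union> {d\<in>Vs m r. \<not> G d}. wt d)" by simp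
    also have "\<dots> = ?Zg + ?Zb" using finite_Vs by (intro sum.union_disjoint) auto
    finally show ?thesis .
  qed
  have cr: "0 < c * real r" using c r by simp
  have "?Zb \<le> (\<Sum>d\<in>{d\<in>Vs m r. \<not> G d}. wt d * Q d / (c * real r))"
  proof (rule sum_mono)
    fix d assume "d \<in> {d\<in>Vs m r. \<not> G d}"
    hence "c * real r \<le> Q d" using good_of_Q[of d m r c \<epsilon>] c unfolding G_def Q_def by force
    hence "1 \<le> Q d / (c * real r)" using cr by simp
    thus "wt d \<le> wt d * Q d / (c * real r)" using wt_pos[of d]
      by (metis mult_le_cancel_left1 less_imp_le times_divide_eq_right not_le)
  qed
  also have "\<dots> \<le> (\<Sum>d\<in>Vs m r. wt d * Q d / (c * real r))"
    using finite_Vs wt_pos cr by (intro sum_mono2) (auto simp: Q_def gq_nonneg sum_nonneg less_imp_le)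
  also have "\<dots> = (\<Sum>d\<in>Vs m r. wt d * Q d) / (c * real r)" by (simp add: sum_divide_distrib)
  also have "\<dots> \<le> real m * ?Z * ((2 * ?y)^2 / (1 - 2 * ?y)) / (c * real r)"
    using expect_bound[OF pos z] cr unfolding Q_def by (intro divide_right_mono) auto
  finally have Zb: "?Zb \<le> real m * ?Z * ((2 * ?y)^2 / (1 - 2 * ?y)) / (c * real r)" .
  have alg: "real m * ((2 * ?y)^2 / (1 - 2 * ?y)) / (c * real r)
     = 4 * ?y / ((1 - 1/real m - real r/real m) * (1 - 2 * ?y) * c)"
  proof -
    have m0: "real m > 0" using m by simp
    have D: "1 - 1/real m - real r/real m = (real m - 1 - real r) / real m" using m0 by (simp add: field_simps)
    have z': "1 - 2 * ?y > 0" using z by simp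
    show ?thesis unfolding D by (rule alg_aux) (use m0 pos z' c r in auto)
  qed
  have "multi_ge2_prob m (2*m+r) G = ?Zg / ?Z" using ge2_prob_eq[OF m] by simp
  also have "?Zg / ?Z = 1 - ?Zb / ?Z" using split Zpos by (simp add: field_simps)
  finally have P: "multi_ge2_prob m (2*m+r) G = 1 - ?Zb / ?Z" .
  have "?Zb / ?Z \<le> real m * ((2 * ?y)^2 / (1 - 2 * ?y)) / (c * real r)"
    using Zb Zpos by (simp add: field_simps)
  thus ?thesis using P alg unfolding G_def by linarith
qed

lemma prob_le1:
  assumes m: "m > 0"
  shows "multi_ge2_prob m (2*m+r) P \<le> 1"
proof -
  have Zpos: "0 < (\<Sum>d\<in>Vs m r. wt d)"
    using finite_Vs Vs_ne[OF m, of r] wt_pos by (intro sum_pos2) (auto simp: less_imp_le)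
  have "(\<Sum>d\<in>{d\<in>Vs m r. P d}. wt d) \<le> (\<Sum>d\<in>Vs m r. wt d)"
    using finite_Vs wt_pos by (intro sum_mono2) (auto simp: less_imp_le)
  thus ?thesis using ge2_prob_eq[OF m] Zpos by simp
qed


lemma y_eq:
  fixes m r :: real assumes "m > 0"
  shows "r/(m-1-r) = (r/m)/(1 - 1/m - r/m)"
proof -
  have "1 - 1/m - r/m = (m-1-r)/m" using assms by (simp add: field_simps)
  thus ?thesis using assms by simp
qed

theorem mainTheorem13:
  fixes v r :: "nat \<Rightarrow> nat"
  assumes "\<forall>n. v n > 0" and "\<forall>n. r n > 0"
    and "filterlim v at_top sequentially"
    and "filterlim r at_top sequentially"
    and "(\<lambda>n. real (r n) / real (v n)) \<longlonglongrightarrow> 0"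
  shows "\<forall>\<epsilon>>0. (\<lambda>n. multi_ge2_prob (v n) (2 * v n + r n)
            (\<lambda>d. \<bar>real (D3 d) - real (r n)\<bar> \<le> \<epsilon> * real (r n) \<and>
                 (\<Sum>i | i < length d \<and> d ! i \<ge> 3. d ! i choose 2) < 4 * r n))
          \<longlonglongrightarrow> 1"
proof (intro allI impI)
  fix \<epsilon> :: real assume e: "\<epsilon> > 0"
  define c where "c = min \<epsilon> 1"
  have c: "0 < c" "c \<le> \<epsilon>" "c \<le> 1" using e by (auto simp: c_def)
  define q where "q n = real (r n) / real (v n)" for n
  define u where "u n = 1 / real (v n)" for n
  define D where "D n = 1 - u n - q n" for n
  define y where "y n = real (r n) / (real (v n) - 1 - real (r n))" for n
  define B where "B n = 4 * y n / (D n * (1 - 2 * y n) * c)" for n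
  have q: "q \<longlonglongrightarrow> 0" using assms(5) unfolding q_def .
  have "filterlim (\<lambda>n. real (v n)) at_top sequentially"
    using filterlim_compose[OF filterlim_real_sequentially assms(3)] by (simp add: o_def)
  hence u: "u \<longlonglongrightarrow> 0" unfolding u_def using tendsto_inverse_0_at_top by (simp add: inverse_eq_divide)
  have Dl: "D \<longlonglongrightarrow> 1" unfolding D_def using tendsto_diff[OF tendsto_diff[OF tendsto_const u] q] by simp
  have yD: "y n = q n / D n" for n unfolding y_def q_def D_def u_def
    by (rule y_eq) (use assms(1) in simp)
  have yl: "y \<longlonglongrightarrow> 0" unfolding yD[abs_def] using tendsto_divide[OF q Dl] by simp
  have Bl: "B \<longlonglongrightarrow> 0" unfolding B_def
    using tendsto_divide[OF tendsto_mult[OF tendsto_const yl]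
        tendsto_mult[OF tendsto_mult[OF Dl tendsto_diff[OF tendsto_const tendsto_mult[OF tendsto_const yl]]] tendsto_const]] c
    by simp
  have ev1: "eventually (\<lambda>n. D n > 1/2) sequentially" using Dl by (rule order_tendstoD) simp
  have ev2: "eventually (\<lambda>n. y n < 1/4) sequentially" using yl by (rule order_tendstoD) simp
  let ?P = "\<lambda>n. multi_ge2_prob (v n) (2 * v n + r n)
            (\<lambda>d. \<bar>real (D3 d) - real (r n)\<bar> \<le> \<epsilon> * real (r n) \<and>
                 (\<Sum>i | i < length d \<and> d ! i \<ge> 3. d ! i choose 2) < 4 * r n)"
  have lo: "eventually (\<lambda>n. 1 - B n \<le> ?P n) sequentially"
    using ev1 ev2
  proof eventually_elim
    case (elim n)
    have vp: "real (v n) > 0" using assms(1) by simp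
    have "D n = (real (v n) - 1 - real (r n)) / real (v n)" unfolding D_def u_def q_def using vp by (simp add: field_simps)
    hence "real (v n) - 1 - real (r n) = D n * real (v n)" using vp by (simp add: field_simps)
    moreover have "D n * real (v n) > 0" using elim(1) vp by simp
    ultimately have pos: "0 < real (v n) - 1 - real (r n)" by linarith
    have "2 * y n < 1" using elim(2) by linarith
    hence z: "2 * (real (r n) / (real (v n) - 1 - real (r n))) < 1" unfolding y_def .
    show ?case using prob_bound[OF _ _ pos z c] assms(1,2) unfolding B_def y_def D_def u_def q_def by simp
  qed
  have hi: "eventually (\<lambda>n. ?P n \<le> 1) sequentially" using prob_le1 assms(1) by simp
  have "(\<lambda>n. 1 - B n) \<longlonglongrightarrow> 1" using tendsto_diff[OF tendsto_const Bl] by simp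
  thus "?P \<longlonglongrightarrow> 1" using tendsto_sandwich[OF lo hi] by simp
qed

end
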